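(* Let $H$ be a transitive permutation group on a finite set $\Delta$ with $|\Delta|\ge2$, let $K$ be a permutation group on a finite nonempty set $\Gamma$, and let $G=H\wr K$ act in product action on $\Omega=\mathrm{Fun}(\Gamma,\Delta)$. Then \[ \mathbf{m}(G)\le\mathbf{m}(H)^{|\Gamma|}. \]
   Context: $\mathrm{Fun}(\Gamma,\Delta)$ is the set of functions $\Gamma\to\Delta$ (the $|\Gamma|$-fold Cartesian power of $\Delta$). The product action of $g=(h_\gamma)_{\gamma\in\Gamma}k\in H\wr K=\mathrm{Fun}(\Gamma,H)\rtimes K$ is $f^g(\gamma)=f(k^{-1}\gamma)^{h_{k^{-1}\gamma}}$ (writing the action of $K$ on $\Gamma$ on the left). For a transitive permutation group $X$ on a finite set with at least $2$ points, a subset $A$ is self-separable for $X$ if there exists $x\in X$ with $A\cap A^x=\emptyset$; $\mathbf{m}(X)$ is the minimum cardinality of a subset that is not self-separable for $X$. *)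

theory Defs
  imports "HOL-Library.FuncSet"
begin

definition perm_group_on :: "'a set \<Rightarrow> ('a \<Rightarrow> 'a) set \<Rightarrow> bool" where
  "perm_group_on D X \<longleftrightarrow> X \<noteq> {} \<and>
     (\<forall>x\<in>X. bij x \<and> (\<forall>a. a \<notin> D \<longrightarrow> x a = a)) \<and>
     (\<forall>x\<in>X. \<forall>y\<in>X. x \<circ> y \<in> X) \<and> (\<forall>x\<in>X. inv x \<in> X)"

definition transitive_on :: "'a set \<Rightarrow> ('a \<Rightarrow> 'a) set \<Rightarrow> bool" where
  "transitive_on D X \<longleftrightarrow> (\<forall>a\<in>D. \<forall>b\<in>D. \<exists>x\<in>X. x a = b)"

definition prod_action :: "'g set \<Rightarrow> ('g \<Rightarrow> 'g) \<Rightarrow> ('g \<Rightarrow> 'd \<Rightarrow> 'd) \<Rightarrow> ('g \<Rightarrow> 'd) \<Rightarrow> ('g \<Rightarrow> 'd)" where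
  "prod_action \<Gamma> k h f = (\<lambda>\<gamma>. if \<gamma> \<in> \<Gamma> then h (inv k \<gamma>) (f (inv k \<gamma>)) else undefined)"

text \<open>The wreath product H wr K, as the set of permutations of Fun(Gamma,Delta) it induces.\<close>
definition wreath_prod_action :: "'g set \<Rightarrow> ('d \<Rightarrow> 'd) set \<Rightarrow> ('g \<Rightarrow> 'g) set
    \<Rightarrow> (('g \<Rightarrow> 'd) \<Rightarrow> ('g \<Rightarrow> 'd)) set" where
  "wreath_prod_action \<Gamma> H K =
     {prod_action \<Gamma> k h | k h. k \<in> K \<and> h \<in> \<Gamma> \<rightarrow>\<^sub>E H}"

definition self_separable :: "('a \<Rightarrow> 'a) set \<Rightarrow> 'a set \<Rightarrow> bool" where
  "self_separable X A \<longleftrightarrow> (\<exists>x\<in>X. A \<inter> x ` A = {})"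

definition min_nonsep :: "'a set \<Rightarrow> ('a \<Rightarrow> 'a) set \<Rightarrow> nat" where
  "min_nonsep D X = (LEAST n. \<exists>A. A \<subseteq> D \<and> card A = n \<and> \<not> self_separable X A)"

end

theory Submission
  imports Defs
begin

lemma nonsep_exists:
  assumes "perm_group_on D X" "D \<noteq> {}"
  shows "\<not> self_separable X D"
proof -
  have "x ` D = D" if "x \<in> X" for x
  proof -
    have b: "bij x" and f: "\<forall>a. a \<notin> D \<longrightarrow> x a = a" using assms(1) that unfolding perm_group_on_def by auto
    show ?thesis
    proof
      show "x ` D \<subseteq> D"
      proof
        fix y assume "y \<in> x ` D"
        then obtain a where a: "a \<in> D" "y = x a" by auto
        show "y \<in> D"
        proof (rule ccontr)
          assume "y \<notin> D"
          then have "x y = y" using f by auto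
          then have "x y = x a" using a by simp
          then have "y = a" using b by (meson bij_def injD)
          then show False using a \<open>y \<notin> D\<close> by simp
        qed
      qed
      show "D \<subseteq> x ` D"
      proof
        fix y assume y: "y \<in> D"
        obtain a where a: "x a = y" using b by (metis bij_def surjD)
        have "a \<in> D" using f a y by (metis)
        then show "y \<in> x ` D" using a by auto
      qed
    qed
  qed
  then show ?thesis using assms(2) unfolding self_separable_def by auto
qed

theorem theoremH:
  fixes \<Delta> :: "'d set" and \<Gamma> :: "'g set"
    and H :: "('d \<Rightarrow> 'd) set" and K :: "('g \<Rightarrow> 'g) set"
  assumes "finite \<Delta>" and "card \<Delta> \<ge> 2"
    and "perm_group_on \<Delta> H" and "transitive_on \<Delta> H"
    and "finite \<Gamma>" and "\<Gamma> \<noteq> {}"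
    and "perm_group_on \<Gamma> K"
  shows "min_nonsep (\<Gamma> \<rightarrow>\<^sub>E \<Delta>) (wreath_prod_action \<Gamma> H K)
           \<le> min_nonsep \<Delta> H ^ card \<Gamma>"
proof -
  have "\<Delta> \<noteq> {}" using assms(2) by auto
  then have "\<not> self_separable H \<Delta>" using nonsep_exists assms(3) by blast
  then have ex: "\<exists>n. \<exists>A. A \<subseteq> \<Delta> \<and> card A = n \<and> \<not> self_separable H A" by blast
  obtain A where A: "A \<subseteq> \<Delta>" "card A = min_nonsep \<Delta> H" "\<not> self_separable H A"
    unfolding min_nonsep_def using LeastI_ex[OF ex] by metis
  define B where "B = \<Gamma> \<rightarrow>\<^sub>E A"
  have Bsub: "B \<subseteq> \<Gamma> \<rightarrow>\<^sub>E \<Delta>" unfolding B_def using A(1) by (auto simp: PiE_def Pi_def)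
  have cardB: "card B = min_nonsep \<Delta> H ^ card \<Gamma>"
    unfolding B_def using assms(5) A(2) by (simp add: card_PiE)
  have "\<not> self_separable (wreath_prod_action \<Gamma> H K) B"
    unfolding self_separable_def
  proof
    assume "\<exists>x\<in>wreath_prod_action \<Gamma> H K. B \<inter> x ` B = {}"
    then obtain k h where kh: "k \<in> K" "h \<in> \<Gamma> \<rightarrow>\<^sub>E H"
      and dis: "B \<inter> prod_action \<Gamma> k h ` B = {}"
      unfolding wreath_prod_action_def by auto
    have kb: "bij k" and kf: "\<forall>a. a \<notin> \<Gamma> \<longrightarrow> k a = a"
      using assms(7) kh(1) unfolding perm_group_on_def by auto
    have invk: "inv k g \<in> \<Gamma>" if "g \<in> \<Gamma>" for g
    proof (rule ccontr)
      assume n: "inv k g \<notin> \<Gamma>"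
      have "k (inv k g) = g" using kb by (meson bij_inv_eq_iff)
      then show False using kf n that by metis
    qed
    have "\<forall>\<gamma>\<in>\<Gamma>. \<exists>a\<in>A. h \<gamma> a \<in> A"
    proof
      fix \<gamma> assume "\<gamma> \<in> \<Gamma>"
      then have "h \<gamma> \<in> H" using kh(2) by auto
      then have "A \<inter> h \<gamma> ` A \<noteq> {}" using A(3) unfolding self_separable_def by blast
      then show "\<exists>a\<in>A. h \<gamma> a \<in> A" by auto
    qed
    then obtain a where a: "\<And>\<gamma>. \<gamma> \<in> \<Gamma> \<Longrightarrow> a \<gamma> \<in> A \<and> h \<gamma> (a \<gamma>) \<in> A" by metis
    define f where "f = (\<lambda>\<gamma>. if \<gamma> \<in> \<Gamma> then a \<gamma> else undefined)"
    have fB: "f \<in> B" unfolding B_def f_def using a by auto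
    have "prod_action \<Gamma> k h f \<in> B"
      unfolding B_def prod_action_def f_def using a invk by (auto simp: PiE_def Pi_def extensional_def)
    then show False using dis fB by auto
  qed
  then have "min_nonsep (\<Gamma> \<rightarrow>\<^sub>E \<Delta>) (wreath_prod_action \<Gamma> H K) \<le> card B"
    unfolding min_nonsep_def using Bsub by (intro Least_le) blast
  then show ?thesis using cardB by simp
qed

end
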